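(* Let $v\in C^1(\mathbb{R}^2)$ be a classical solution of the stationary Euler equations on $\mathbb{R}^2$. Suppose there is a bounded region $\Omega\subset\mathbb{R}^2$ with $C^1$ boundary, whose boundary consists of $J\ge1$ connected components, such that $v=\nabla^\perp\bar\psi$ in $\Omega$ and $v=0$ in $\mathbb{R}^2\setminus\Omega$, where $\bar\psi\in C^2(\overline\Omega)$ solves $\Delta\bar\psi+f(\bar\psi)=0$ in $\Omega$ for some $f\in C(\mathbb{R})$. Then $v=\nabla^\perp\psi$ for some $\psi\in C^2(\mathbb{R}^2)$ which satisfies $\Delta\psi+f(\psi)=0$ in all of $\mathbb{R}^2$.
   Context: The stationary Euler equations on $\mathbb{R}^2$: $v\cdot\nabla v+\nabla p=0$ and $\operatorname{div}v=0$ for some pressure $p$. $\nabla^\perp\psi:=(\partial_{x_2}\psi,-\partial_{x_1}\psi)$. *)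

theory Defs
  imports "HOL-Analysis.Analysis"
begin

definition pd1 :: "(real \<times> real \<Rightarrow> real) \<Rightarrow> real \<times> real \<Rightarrow> real" where
  "pd1 g x = frechet_derivative g (at x) (1, 0)"

definition pd2 :: "(real \<times> real \<Rightarrow> real) \<Rightarrow> real \<times> real \<Rightarrow> real" where
  "pd2 g x = frechet_derivative g (at x) (0, 1)"

definition C1_on :: "(real \<times> real) set \<Rightarrow> (real \<times> real \<Rightarrow> real) \<Rightarrow> bool" where
  "C1_on S g \<longleftrightarrow> (\<forall>x\<in>S. g differentiable (at x))
      \<and> continuous_on S (pd1 g) \<and> continuous_on S (pd2 g)"

definition C2_on :: "(real \<times> real) set \<Rightarrow> (real \<times> real \<Rightarrow> real) \<Rightarrow> bool" where
  "C2_on S g \<longleftrightarrow> C1_on S g \<and> C1_on S (pd1 g) \<and> C1_on S (pd2 g)"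

definition ext_closure :: "(real \<times> real) set \<Rightarrow> (real \<times> real \<Rightarrow> real) \<Rightarrow> bool" where
  "ext_closure S u \<longleftrightarrow> (\<exists>h. continuous_on (closure S) h \<and> (\<forall>x\<in>S. h x = u x))"

definition C2_closure :: "(real \<times> real) set \<Rightarrow> (real \<times> real \<Rightarrow> real) \<Rightarrow> bool" where
  "C2_closure S g \<longleftrightarrow> C2_on S g \<and>
     ext_closure S g \<and> ext_closure S (pd1 g) \<and> ext_closure S (pd2 g) \<and>
     ext_closure S (pd1 (pd1 g)) \<and> ext_closure S (pd2 (pd1 g)) \<and>
     ext_closure S (pd1 (pd2 g)) \<and> ext_closure S (pd2 (pd2 g))"

definition laplacian :: "(real \<times> real \<Rightarrow> real) \<Rightarrow> real \<times> real \<Rightarrow> real" where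
  "laplacian g x = pd1 (pd1 g) x + pd2 (pd2 g) x"

definition grad_perp :: "(real \<times> real \<Rightarrow> real) \<Rightarrow> real \<times> real \<Rightarrow> real \<times> real" where
  "grad_perp g x = (pd2 g x, - pd1 g x)"

definition stationary_euler :: "(real \<times> real \<Rightarrow> real \<times> real) \<Rightarrow> bool" where
  "stationary_euler v \<longleftrightarrow>
     C1_on UNIV (\<lambda>x. fst (v x)) \<and> C1_on UNIV (\<lambda>x. snd (v x)) \<and>
     (\<exists>p. C1_on UNIV p \<and>
       (\<forall>x. fst (v x) * pd1 (\<lambda>y. fst (v y)) x + snd (v x) * pd2 (\<lambda>y. fst (v y)) x + pd1 p x = 0
          \<and> fst (v x) * pd1 (\<lambda>y. snd (v y)) x + snd (v x) * pd2 (\<lambda>y. snd (v y)) x + pd2 p x = 0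
          \<and> pd1 (\<lambda>y. fst (v y)) x + pd2 (\<lambda>y. snd (v y)) x = 0))"

text \<open>Open set with C^1 boundary: near every boundary point, after a rigid rotation of
  coordinates centred at the point, the set is the region below the graph of a C^1 function.\<close>
definition C1_boundary :: "(real \<times> real) set \<Rightarrow> bool" where
  "C1_boundary \<Omega> \<longleftrightarrow> (\<forall>p\<in>frontier \<Omega>. \<exists>r>0. \<exists>\<theta>::real. \<exists>h::real \<Rightarrow> real.
      h C1_differentiable_on UNIV \<and>
      \<Omega> \<inter> ball p r = {x \<in> ball p r.
         - sin \<theta> * (fst x - fst p) + cos \<theta> * (snd x - snd p)
           < h (cos \<theta> * (fst x - fst p) + sin \<theta> * (snd x - snd p))})"

end

theory Submission
  imports Defs
begin

lemma lin2:
  fixes F :: "real \<times> real \<Rightarrow> real"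
  assumes "linear F"
  shows "F h = fst h * F (1,0) + snd h * F (0,1)"
proof -
  have "h = fst h *\<^sub>R (1,0) + snd h *\<^sub>R (0,1)" by (cases h) auto
  then have "F h = F (fst h *\<^sub>R (1,0) + snd h *\<^sub>R (0,1))" by simp
  also have "\<dots> = F (fst h *\<^sub>R (1,0)) + F (snd h *\<^sub>R (0,1))"
    by (rule linear_add[OF assms])
  also have "\<dots> = fst h * F (1,0) + snd h * F (0,1)"
    by (simp only: linear_scale[OF assms] real_scaleR_def)
  finally show ?thesis .
qed

lemma partial1:
  assumes "g differentiable (at (s,t))"
  shows "((\<lambda>s. g (s,t)) has_real_derivative pd1 g (s,t)) (at s)"
proof -
  let ?F = "frechet_derivative g (at (s,t))"
  have g: "(g has_derivative ?F) (at (s,t))" using assms by (simp add: frechet_derivative_works)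
  have lin: "linear ?F" using g has_derivative_linear by blast
  have "((\<lambda>s. (s,t)) has_derivative (\<lambda>h. (h,0))) (at s)" by (auto intro!: derivative_eq_intros)
  from has_derivative_compose[OF this g[simplified]]
  have "((\<lambda>s. g (s,t)) has_derivative (\<lambda>h. ?F (h,0))) (at s)" by simp
  moreover have "(\<lambda>h. ?F (h,0)) = (*) (pd1 g (s,t))"
  proof
    fix h show "?F (h,0) = pd1 g (s,t) * h" using lin2[OF lin, of "(h,0)"] by (simp add: pd1_def)
  qed
  ultimately show ?thesis by (simp add: has_field_derivative_def)
qed

lemma partial2:
  assumes "g differentiable (at (s,t))"
  shows "((\<lambda>t. g (s,t)) has_real_derivative pd2 g (s,t)) (at t)"
proof -
  let ?F = "frechet_derivative g (at (s,t))"
  have g: "(g has_derivative ?F) (at (s,t))" using assms by (simp add: frechet_derivative_works)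
  have lin: "linear ?F" using g has_derivative_linear by blast
  have "((\<lambda>t. (s,t)) has_derivative (\<lambda>h. (0,h))) (at t)" by (auto intro!: derivative_eq_intros)
  from has_derivative_compose[OF this g[simplified]]
  have "((\<lambda>t. g (s,t)) has_derivative (\<lambda>h. ?F (0,h))) (at t)" by simp
  moreover have "(\<lambda>h. ?F (0,h)) = (*) (pd2 g (s,t))"
  proof
    fix h show "?F (0,h) = pd2 g (s,t) * h" using lin2[OF lin, of "(0,h)"] by (simp add: pd2_def)
  qed
  ultimately show ?thesis by (simp add: has_field_derivative_def)
qed

lemma pd_of_deriv:
  assumes "(g has_derivative (\<lambda>h. fst h * A + snd h * B)) (at x)"
  shows "pd1 g x = A" "pd2 g x = B"
  using frechet_derivative_at[OF assms, symmetric] by (auto simp: pd1_def pd2_def)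

lemma fd_local:
  assumes "open S" "x \<in> S" "\<And>y. y \<in> S \<Longrightarrow> g y = h y"
  shows "frechet_derivative g (at x) = frechet_derivative h (at x)"
proof -
  have "\<And>D. (g has_derivative D) (at x) \<longleftrightarrow> (h has_derivative D) (at x)"
    using has_derivative_transform_within_open[OF _ assms(1,2)] assms(3) by metis
  then show ?thesis unfolding frechet_derivative_def by simp
qed

lemma pd_local:
  assumes "open S" "x \<in> S" "\<And>y. y \<in> S \<Longrightarrow> g y = h y"
  shows "pd1 g x = pd1 h x" "pd2 g x = pd2 h x"
  using fd_local[OF assms] by (auto simp: pd1_def pd2_def)


lemma primitive:
  fixes g1 g2 :: "real \<times> real \<Rightarrow> real" and R :: real
  assumes d1: "\<And>x. g1 differentiable (at x)" and d2: "\<And>x. g2 differentiable (at x)"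
    and c1: "continuous_on UNIV (pd1 g1)"
    and dv: "\<And>x. pd1 g1 x + pd2 g2 x = 0"
    and supp: "\<And>x. R \<le> norm x \<Longrightarrow> g1 x = 0 \<and> g2 x = 0"
    and R: "R > 0"
  shows "\<exists>\<psi>. \<forall>x. (\<psi> has_derivative (\<lambda>h. fst h * (- g2 x) + snd h * g1 x)) (at x)"
proof -
  define a where "a = - R - 1"
  define F where "F = (\<lambda>x y. integral {a..y} (\<lambda>t. g1 (x,t)))"
  have zero: "g1 (s,t) = 0 \<and> g2 (s,t) = 0" if "t \<le> - R" for s t
  proof -
    have "R \<le> norm (snd (s,t))" using that by simp
    also have "\<dots> \<le> norm (s,t)" using real_sqrt_le_mono[of "t^2" "s^2+t^2"] by (simp add: norm_Pair)
    finally show ?thesis using supp by blast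
  qed
  have cg1: "continuous_on UNIV g1"
    using d1 differentiable_imp_continuous_within continuous_at_imp_continuous_on by blast
  have cg1s: "continuous_on S (\<lambda>t. g1 (x,t))" for S x
    by (rule continuous_on_compose2[OF cg1]) (auto intro!: continuous_intros)
  have Fy: "((\<lambda>y. F x y) has_real_derivative g1 (x,y)) (at y)" for x y
  proof (cases "y < - R")
    case True
    have "((\<lambda>y. 0) has_real_derivative 0) (at y)" by simp
    moreover have "F x z = 0" if "z \<in> {..< -R}" for z
    proof -
      have "F x z = integral {a..z} (\<lambda>t. 0)"
        unfolding F_def using that zero by (intro integral_cong) auto
      then show ?thesis by simp
    qed
    ultimately have "((\<lambda>y. F x y) has_real_derivative 0) (at y)"
      using has_field_derivative_transform_within_open[of "\<lambda>y. 0" 0 y "{..< -R}" "\<lambda>y. F x y"] True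
      by auto
    then show ?thesis using zero[of y x] True by simp
  next
    case False
    have "((\<lambda>y. F x y) has_real_derivative g1 (x,y)) (at y within {a..y+1})"
      unfolding F_def using False R
      by (intro integral_has_real_derivative cg1s) (auto simp: a_def)
    then have "((\<lambda>y. F x y) has_real_derivative g1 (x,y)) (at y within {a<..<y+1})"
      by (rule DERIV_subset) auto
    then show ?thesis using False R
      by (subst (asm) at_within_open) (auto simp: a_def)
  qed
  have Fx: "((\<lambda>x. F x y) has_real_derivative (- g2 (x,y))) (at x)" for x y
  proof -
    have "((\<lambda>x. integral (cbox a y) (\<lambda>t. g1 (x,t))) has_real_derivative
            integral (cbox a y) (\<lambda>t. pd1 g1 (x,t))) (at x within UNIV)"
    proof (rule leibniz_rule_field_derivative)
      show "((\<lambda>x. g1 (x, t)) has_field_derivative pd1 g1 (x, t)) (at x within UNIV)" for x t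
        using partial1[OF d1] by simp
      show "(\<lambda>t. g1 (x, t)) integrable_on cbox a y" for x
        by (simp add: cbox_interval integrable_continuous_interval cg1s)
      have "(\<lambda>(x, t). pd1 g1 (x, t)) = pd1 g1" by auto
      then show "continuous_on (UNIV \<times> cbox a y) (\<lambda>(x, t). pd1 g1 (x, t))"
        using continuous_on_subset[OF c1] by simp
    qed auto
    moreover have "integral {a..y} (\<lambda>t. pd1 g1 (x,t)) = - g2 (x,y)"
    proof (cases "a \<le> y")
      case True
      have I1: "((\<lambda>t. pd2 g2 (x,t)) has_integral (g2 (x,y) - g2 (x,a))) {a..y}"
        using True
        by (intro fundamental_theorem_of_calculus)
           (auto intro!: has_field_derivative_at_within partial2[OF d2]
             simp: has_real_derivative_iff_has_vector_derivative[symmetric])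
      have z0: "g2 (x,a) = 0" using zero[of a x] R by (simp add: a_def)
      have I2: "((\<lambda>t. - pd1 g1 (x,t)) has_integral g2 (x,y)) {a..y}"
      proof -
        have "(\<lambda>t. - pd1 g1 (x,t)) = (\<lambda>t. pd2 g2 (x,t))"
          proof
            fix t show "- pd1 g1 (x,t) = pd2 g2 (x,t)" using dv[of "(x,t)"] by linarith
          qed
        with I1 z0 show ?thesis by simp
      qed
      have "((\<lambda>t. pd1 g1 (x,t)) has_integral - g2 (x,y)) {a..y}"
        using has_integral_neg[OF I2] by simp
      then show ?thesis by (rule integral_unique)
    next
      case False
      then have "g2 (x,y) = 0" using zero[of y x] R by (simp add: a_def)
      then show ?thesis using False by simp
    qed
    ultimately show ?thesis by (simp add: F_def cbox_interval)
  qed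
  have "((\<lambda>(x, y). F x y) has_derivative (\<lambda>(tx, ty). tx * (- g2 (x,y)) + blinfun_mult_right (g1 (x,y)) ty))
          (at (x, y) within UNIV \<times> UNIV)" for x y
  proof (rule has_derivative_partialsI)
    show "((\<lambda>x. F x y) has_derivative (\<lambda>tx. tx * (- g2 (x,y)))) (at x within UNIV)"
    proof -
      have e: "(\<lambda>tx. tx * (- g2 (x,y))) = (*) (- g2 (x,y))" by (rule ext) simp
      show ?thesis using Fx[where x=x and y=y] by (simp only: e has_field_derivative_def)
    qed
    show "((\<lambda>y. F x y) has_derivative blinfun_apply (blinfun_mult_right (g1 (x, y)))) (at y within UNIV)" for x y
      using Fy[where x=x and y=y] by (simp add: has_field_derivative_def mult.commute)
    show "continuous (at (x, y) within UNIV \<times> UNIV) (\<lambda>(x, y). blinfun_mult_right (g1 (x, y)))"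
    proof -
      have "(\<lambda>(x, y). blinfun_mult_right (g1 (x, y))) = (\<lambda>z. blinfun_mult_right (g1 z))" by auto
      moreover have "continuous (at (x,y)) (\<lambda>z. blinfun_mult_right (g1 z))"
        using cg1 by (auto intro!: continuous_intros simp: continuous_on_eq_continuous_at)
      ultimately show ?thesis by simp
    qed
  qed auto
  then have "((\<lambda>(x, y). F x y) has_derivative (\<lambda>h. fst h * (- g2 z) + snd h * g1 z)) (at z)" for z
    by (cases z) (simp add: split_def mult.commute)
  then show ?thesis by blast
qed


lemma deriv_form:
  assumes "g differentiable (at x)"
  shows "(g has_derivative (\<lambda>h. fst h * pd1 g x + snd h * pd2 g x)) (at x)"
proof -
  have g: "(g has_derivative frechet_derivative g (at x)) (at x)"
    using assms by (simp add: frechet_derivative_works)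
  have lin: "linear (frechet_derivative g (at x))" using g has_derivative_linear by blast
  have "frechet_derivative g (at x) = (\<lambda>h. fst h * pd1 g x + snd h * pd2 g x)"
  proof
    fix h show "frechet_derivative g (at x) h = fst h * pd1 g x + snd h * pd2 g x"
      using lin2[OF lin, of h] by (simp add: pd1_def pd2_def)
  qed
  then show ?thesis using g by simp
qed

lemma pd_minus:
  assumes "g differentiable (at x)"
  shows "pd1 (\<lambda>y. - g y) x = - pd1 g x" "pd2 (\<lambda>y. - g y) x = - pd2 g x"
proof -
  have "((\<lambda>y. - g y) has_derivative (\<lambda>h. - (fst h * pd1 g x + snd h * pd2 g x))) (at x)"
    using has_derivative_minus[OF deriv_form[OF assms]] .
  moreover have "(\<lambda>h. - (fst h * pd1 g x + snd h * pd2 g x)) = (\<lambda>h. fst h * (- pd1 g x) + snd h * (- pd2 g x))"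
    by (rule ext) simp
  ultimately have "((\<lambda>y. - g y) has_derivative (\<lambda>h. fst h * (- pd1 g x) + snd h * (- pd2 g x))) (at x)"
    by simp
  from pd_of_deriv[OF this] show "pd1 (\<lambda>y. - g y) x = - pd1 g x" "pd2 (\<lambda>y. - g y) x = - pd2 g x" .
qed

lemma pd_zero: "pd1 (\<lambda>_. 0) x = 0" "pd2 (\<lambda>_. 0) x = 0"
proof -
  have "((\<lambda>_. 0::real) has_derivative (\<lambda>h. fst h * 0 + snd h * 0)) (at x)" by simp
  from pd_of_deriv[OF this] show "pd1 (\<lambda>_. 0) x = 0" "pd2 (\<lambda>_. 0) x = 0" .
qed

theorem propositionA1:
  fixes v :: "real \<times> real \<Rightarrow> real \<times> real"
    and \<Omega> :: "(real \<times> real) set"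
    and \<psi>b :: "real \<times> real \<Rightarrow> real"
    and f :: "real \<Rightarrow> real"
    and J :: nat
  assumes euler: "stationary_euler v"
    and region: "open \<Omega>" "connected \<Omega>" "\<Omega> \<noteq> {}" "bounded \<Omega>"
    and bdry: "C1_boundary \<Omega>"
    and comps: "finite (components (frontier \<Omega>))" "card (components (frontier \<Omega>)) = J" "J \<ge> 1"
    and in_Omega: "\<forall>x\<in>\<Omega>. v x = grad_perp \<psi>b x"
    and outside: "\<forall>x. x \<notin> \<Omega> \<longrightarrow> v x = (0, 0)"
    and reg: "C2_closure \<Omega> \<psi>b"
    and f_cont: "continuous_on UNIV f"
    and pde: "\<forall>x\<in>\<Omega>. laplacian \<psi>b x + f (\<psi>b x) = 0"
  shows "\<exists>\<psi>. C2_on UNIV \<psi> \<and> (\<forall>x. v x = grad_perp \<psi> x)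
             \<and> (\<forall>x. laplacian \<psi> x + f (\<psi> x) = 0)"
proof -
  define v1 where "v1 = (\<lambda>x. fst (v x))"
  define v2 where "v2 = (\<lambda>x. snd (v x))"
  have C1v1: "C1_on UNIV v1" and C1v2: "C1_on UNIV v2"
    using euler unfolding stationary_euler_def v1_def v2_def by blast+
  have dv: "pd1 v1 x + pd2 v2 x = 0" for x
    using euler unfolding stationary_euler_def v1_def v2_def by blast
  have d1: "v1 differentiable (at x)" and d2: "v2 differentiable (at x)" for x
    using C1v1 C1v2 unfolding C1_on_def by blast+
  have cv1: "continuous_on UNIV v1" and cv2: "continuous_on UNIV v2"
    using d1 d2 differentiable_imp_continuous_within continuous_at_imp_continuous_on by blast+
  have cp: "continuous_on UNIV (pd1 v1)" "continuous_on UNIV (pd2 v1)"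
     "continuous_on UNIV (pd1 v2)" "continuous_on UNIV (pd2 v2)"
    using C1v1 C1v2 by (auto simp: C1_on_def)
  obtain R where R: "0 < R" "\<Omega> \<subseteq> ball 0 R" using bounded_subset_ballD[OF region(4)] by blast
  have supp: "v1 x = 0 \<and> v2 x = 0" if "R \<le> norm x" for x
  proof -
    have "x \<notin> \<Omega>" using R that by auto
    then show ?thesis using outside[rule_format, OF \<open>x \<notin> \<Omega>\<close>] by (simp add: v1_def v2_def)
  qed
  obtain \<psi>0 where D0: "\<forall>x. (\<psi>0 has_derivative (\<lambda>h. fst h * (- v2 x) + snd h * v1 x)) (at x)"
    using primitive[OF d1 d2 cp(1) dv supp R(1)] by blast
  have Dpsib: "(\<psi>b has_derivative (\<lambda>h. fst h * (- v2 x) + snd h * v1 x)) (at x)" if "x \<in> \<Omega>" for x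
  proof -
    have "\<psi>b differentiable (at x)" using reg that by (auto simp: C2_closure_def C2_on_def C1_on_def)
    from deriv_form[OF this] show ?thesis
      using in_Omega that by (simp add: grad_perp_def v1_def v2_def)
  qed
  have "(\<lambda>x. \<psi>0 x - \<psi>b x) constant_on \<Omega>"
  proof (rule has_derivative_zero_connected_constant_on[where K="{}"])
    show "continuous_on \<Omega> (\<lambda>x. \<psi>0 x - \<psi>b x)"
      using D0 Dpsib has_derivative_continuous
      by (intro continuous_at_imp_continuous_on ballI continuous_intros) blast+
    show "\<forall>x\<in>\<Omega> - {}. ((\<lambda>x. \<psi>0 x - \<psi>b x) has_derivative (\<lambda>h. 0)) (at x within \<Omega>)"
    proof
      fix x assume "x \<in> \<Omega> - {}"
      then have xO: "x \<in> \<Omega>" by simp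
      have "((\<lambda>x. \<psi>0 x - \<psi>b x) has_derivative (\<lambda>h. (fst h * (- v2 x) + snd h * v1 x) - (fst h * (- v2 x) + snd h * v1 x)))  (at x)"
        by (rule has_derivative_diff[OF D0[rule_format, of x] Dpsib[OF xO]])
      then show "((\<lambda>x. \<psi>0 x - \<psi>b x) has_derivative (\<lambda>h. 0)) (at x within \<Omega>)"
        by (simp add: has_derivative_at_withinI)
    qed
  qed (use region in auto)
  then obtain c where c: "\<And>x. x \<in> \<Omega> \<Longrightarrow> \<psi>0 x - \<psi>b x = c" by (auto simp: constant_on_def)
  define \<Psi> where "\<Psi> = (\<lambda>x. \<psi>0 x - c)"
  have DP: "(\<Psi> has_derivative (\<lambda>h. fst h * (- v2 x) + snd h * v1 x)) (at x)" for x
    using has_derivative_diff[OF D0[rule_format, of x] has_derivative_const[of c]]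
    by (simp add: \<Psi>_def)
  have P1: "pd1 \<Psi> = (\<lambda>x. - v2 x)" and P2: "pd2 \<Psi> = v1"
    using pd_of_deriv[OF DP] by auto
  have Pcont: "continuous_on UNIV \<Psi>"
    using DP has_derivative_continuous continuous_at_imp_continuous_on by blast
  have dm2: "(\<lambda>y. - v2 y) differentiable (at x)" for x
    using d2 by (simp add: differentiable_minus)
  have pm: "pd1 (\<lambda>y. - v2 y) = (\<lambda>x. - pd1 v2 x)" "pd2 (\<lambda>y. - v2 y) = (\<lambda>x. - pd2 v2 x)"
    using pd_minus[OF d2] by auto
  have C2: "C2_on UNIV \<Psi>"
    unfolding C2_on_def C1_on_def P1 P2 pm
    using DP d1 dm2 cv1 cv2 cp
    by (auto intro!: continuous_intros differentiableI)
  have lap: "laplacian \<Psi> x = - pd1 v2 x + pd2 v1 x" for x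
    by (simp add: laplacian_def P1 P2 pm)
  define G where "G = (\<lambda>x. laplacian \<Psi> x + f (\<Psi> x))"
  have Gcont: "continuous_on UNIV G"
    unfolding G_def lap
  proof -
    have "continuous_on UNIV (\<lambda>x. f (\<Psi> x))"
      using continuous_on_compose[OF Pcont, of f] continuous_on_subset[OF f_cont]
      by (simp add: o_def)
    then show "continuous_on UNIV (\<lambda>x. - pd1 v2 x + pd2 v1 x + f (\<Psi> x))"
      using cp by (auto intro!: continuous_intros)
  qed
  have G_Om: "G x = 0" if "x \<in> \<Omega>" for x
  proof -
    have "pd1 (pd1 \<psi>b) x = pd1 (\<lambda>y. - v2 y) x"
      by (rule pd_local(1)[OF region(1) that])
         (use in_Omega in \<open>auto simp: grad_perp_def v2_def\<close>)
    moreover have "pd2 (pd2 \<psi>b) x = pd2 v1 x"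
      by (rule pd_local(2)[OF region(1) that])
         (use in_Omega in \<open>auto simp: grad_perp_def v1_def\<close>)
    moreover have "\<Psi> x = \<psi>b x" using c[OF that] by (simp add: \<Psi>_def)
    ultimately show ?thesis using that lap[of x] pde[rule_format, OF that]
      by (simp add: G_def laplacian_def pm)
  qed
  have G_cl: "G x = 0" if "x \<in> closure \<Omega>" for x
    using continuous_constant_on_closure[of \<Omega> G 0 x] continuous_on_subset[OF Gcont] G_Om that
    by blast
  have G_ext: "G x = 0" if x: "x \<notin> closure \<Omega>" for x
  proof -
    define E where "E = - closure \<Omega>"
    have oE: "open E" by (simp add: E_def open_Compl)
    have xE: "x \<in> E" using x by (simp add: E_def)
    have vz: "v1 z = 0 \<and> v2 z = 0" if "z \<in> E" for z
    proof -
      have "z \<notin> \<Omega>" using that closure_subset by (auto simp: E_def)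
      then show ?thesis using outside[rule_format, OF \<open>z \<notin> \<Omega>\<close>] by (simp add: v1_def v2_def)
    qed
    have Lz: "- pd1 v2 z + pd2 v1 z = 0" if "z \<in> E" for z
    proof -
      have "pd1 v2 z = pd1 (\<lambda>_. 0) z" by (rule pd_local(1)[OF oE that]) (use vz in auto)
      moreover have "pd2 v1 z = pd2 (\<lambda>_. 0) z" by (rule pd_local(2)[OF oE that]) (use vz in auto)
      ultimately show ?thesis by (simp add: pd_zero)
    qed
    define U where "U = connected_component_set E x"
    have UE: "U \<subseteq> E" by (simp add: U_def connected_component_subset)
    have "\<Psi> constant_on U"
    proof (rule has_derivative_zero_connected_constant_on[where K="{}"])
      show "connected U" by (simp add: U_def)
      show "open U" by (simp add: U_def open_connected_component oE)
      show "continuous_on U \<Psi>" using continuous_on_subset[OF Pcont] by blast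
      show "\<forall>z\<in>U - {}. (\<Psi> has_derivative (\<lambda>h. 0)) (at z within U)"
      proof
        fix z assume "z \<in> U - {}"
        then have "z \<in> E" using UE by blast
        then have "v1 z = 0" "v2 z = 0" using vz[of z] by blast+
        then show "(\<Psi> has_derivative (\<lambda>h. 0)) (at z within U)"
          using DP[of z] by (simp add: has_derivative_at_withinI)
      qed
    qed simp
    then obtain c' where c': "\<And>z. z \<in> U \<Longrightarrow> \<Psi> z = c'" by (auto simp: constant_on_def)
    have GU: "G z = f c'" if "z \<in> U" for z
    proof -
      have "z \<in> E" using that UE by blast
      then show ?thesis using c'[OF that] Lz[of z] by (simp add: G_def lap)
    qed
    have xU: "x \<in> U" using xE by (simp add: U_def connected_component_refl)
    have "U \<noteq> UNIV"
    proof
      assume "U = UNIV"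
      obtain w where "w \<in> \<Omega>" using region(3) by blast
      then show False using \<open>U = UNIV\<close> UE closure_subset by (auto simp: E_def)
    qed
    then obtain y where y: "y \<in> frontier U" using frontier_not_empty[of U] xU by blast
    have "y \<in> frontier E" using y frontier_of_connected_component_subset[of E x] by (auto simp: U_def)
    then have "y \<in> closure \<Omega>" using interior_open[OF oE] by (simp add: E_def frontier_def)
    then have "G y = 0" by (rule G_cl)
    moreover have "G y = f c'"
      using continuous_constant_on_closure[of U G "f c'" y] continuous_on_subset[OF Gcont] GU y
      by (auto simp: frontier_def)
    ultimately show ?thesis using GU[OF xU] by simp
  qed
  have "v x = grad_perp \<Psi> x" for x
    by (simp add: grad_perp_def P1 P2 v1_def v2_def)
  moreover have "laplacian \<Psi> x + f (\<Psi> x) = 0" for x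
    using G_cl G_ext unfolding G_def by blast
  ultimately show ?thesis using C2 by blast
qed

end
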